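(* Let $\gamma(x)=\sum_{k\ge2}\gamma_kx^{k-1}$ be a degree distribution with average degree $a$ and maximal degree $d\ge3$, and let $i$ be an integer with $1<i<d$ such that $\gamma_i>0$ and $\gamma_{i+2}>0$. For $\beta>0$ define $$\hat\gamma(x)=\gamma(x)+\beta x^{i}-\Bigl\{\frac{i}{2(i+1)}\beta x^{i-1}+\frac{i+2}{2(i+1)}\beta x^{i+1}\Bigr\}.$$ Then for every sufficiently small $\beta>0$, $\hat\gamma$ is a degree distribution with the same average degree $a$ and the same maximal degree $d$, and moreover $\gamma(x)<\hat\gamma(x)$ for $\frac{i}{i+2}<x<1$ and $\gamma(x)>\hat\gamma(x)$ for $0<x<\frac{i}{i+2}$.
   Context: A degree distribution is a polynomial $\gamma(x)=\sum_{k\ge2}\gamma_kx^{k-1}$ with $\gamma_k\ge0$ and $\sum_k\gamma_k=1$; its maximal degree is the largest $k$ with $\gamma_k\ne0$, and its average degree $a$ is defined by $1/a=\int_0^1\gamma(x)\,dx$. *)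

theory Defs
  imports "HOL-Analysis.Analysis" "HOL-Computational_Algebra.Polynomial"
begin

text \<open>A degree distribution gamma(x) = sum_{k>=2} gamma_k x^(k-1) is represented as a real
polynomial p with coeff p (k - 1) = gamma_k; thus gamma_k = 0 for k < 2 means coeff p 0 = 0.\<close>

definition gamma_coeff :: "real poly \<Rightarrow> nat \<Rightarrow> real" where
  "gamma_coeff p k = (if k = 0 then 0 else coeff p (k - 1))"

definition degree_distribution :: "real poly \<Rightarrow> bool" where
  "degree_distribution p \<longleftrightarrow>
     (\<forall>k. k < 2 \<longrightarrow> gamma_coeff p k = 0) \<and>
     (\<forall>k. gamma_coeff p k \<ge> 0) \<and>
     (\<Sum>k\<le>degree p + 1. gamma_coeff p k) = 1"

definition max_degree :: "real poly \<Rightarrow> nat" where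
  "max_degree p = Max {k. gamma_coeff p k \<noteq> 0}"

definition avg_degree :: "real poly \<Rightarrow> real" where
  "avg_degree p = 1 / integral {0..1} (\<lambda>x. poly p x)"

end

theory Submission
  imports Defs
begin

lemma dd_alt:
  "degree_distribution p \<longleftrightarrow> coeff p 0 = 0 \<and> (\<forall>j. coeff p j \<ge> 0) \<and> poly p 1 = 1"
proof -
  have s: "(\<Sum>k\<le>degree p + 1. gamma_coeff p k) = poly p 1"
  proof -
    have "(\<Sum>k\<le>degree p + 1. gamma_coeff p k) = (\<Sum>k\<le>Suc (degree p). gamma_coeff p k)" by simp
    also have "\<dots> = gamma_coeff p 0 + (\<Sum>k\<le>degree p. gamma_coeff p (Suc k))"
      by (subst sum.atMost_Suc_shift) simp
    also have "\<dots> = (\<Sum>k\<le>degree p. coeff p k)" by (simp add: gamma_coeff_def)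
    also have "\<dots> = poly p 1" by (simp add: poly_altdef)
    finally show ?thesis .
  qed
  have a: "(\<forall>k. k < 2 \<longrightarrow> gamma_coeff p k = 0) \<longleftrightarrow> coeff p 0 = 0"
    by (auto simp: gamma_coeff_def less_2_cases_iff)
  have b: "(\<forall>k. gamma_coeff p k \<ge> 0) \<longleftrightarrow> (\<forall>j. coeff p j \<ge> 0)"
    by (auto simp: gamma_coeff_def)
  show ?thesis unfolding degree_distribution_def s a b ..
qed

lemma finite_S: "finite {k. gamma_coeff p k \<noteq> 0}"
proof (rule finite_subset[of _ "{..degree p + 1}"])
  show "{k. gamma_coeff p k \<noteq> 0} \<subseteq> {..degree p + 1}"
  proof
    fix k assume "k \<in> {k. gamma_coeff p k \<noteq> 0}"
    then have "k \<noteq> 0" "coeff p (k - 1) \<noteq> 0" by (auto simp: gamma_coeff_def split: if_splits)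
    then have "k - 1 \<le> degree p" by (simp add: le_degree)
    then show "k \<in> {..degree p + 1}" by simp
  qed
qed simp

theorem lemma8:
  fixes p :: "real poly" and i :: nat
  assumes "degree_distribution p"
    and "max_degree p \<ge> 3"
    and "1 < i" and "i < max_degree p"
    and "gamma_coeff p i > 0" and "gamma_coeff p (i + 2) > 0"
  shows "\<exists>\<beta>0>0. \<forall>\<beta>. 0 < \<beta> \<and> \<beta> < \<beta>0 \<longrightarrow>
           (let q = p + monom \<beta> i
                    - (monom (real i / (2 * (real i + 1)) * \<beta>) (i - 1)
                       + monom ((real i + 2) / (2 * (real i + 1)) * \<beta>) (i + 1))
            in degree_distribution q \<and>
               avg_degree q = avg_degree p \<and>
               max_degree q = max_degree p \<and>
               (\<forall>x. real i / (real i + 2) < x \<and> x < 1 \<longrightarrow> poly p x < poly q x) \<and>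
               (\<forall>x. 0 < x \<and> x < real i / (real i + 2) \<longrightarrow> poly p x > poly q x))"
proof -
  define c1 where "c1 = real i / (2 * (real i + 1))"
  define c2 where "c2 = (real i + 2) / (2 * (real i + 1))"
  have c1: "0 < c1" "c1 < 1" using assms(3) by (auto simp: c1_def field_simps)
  have c2: "0 < c2" "c2 < 1" using assms(3) by (auto simp: c2_def field_simps)
  have c12: "c1 + c2 = 1"
  proof -
    have "2 * (real i + 1) > 0" by simp
    then show ?thesis unfolding c1_def c2_def by (simp add: divide_simps)
  qed
  have ne[simp]: "i - 1 \<noteq> i" "i \<noteq> i - 1" "i - 1 \<noteq> i + 1" "i + 1 \<noteq> i - 1" "i - Suc 0 \<noteq> Suc i" "Suc i \<noteq> i - Suc 0"
    "i - Suc 0 \<noteq> i" "i \<noteq> i - Suc 0"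
    using assms(3) by simp_all
  have gi: "coeff p (i - 1) > 0" using assms(3,5) by (simp add: gamma_coeff_def)
  have gi2: "coeff p (i + 1) > 0" using assms(6) by (simp add: gamma_coeff_def)
  have dd: "coeff p 0 = 0" "\<And>j. coeff p j \<ge> 0" "poly p 1 = 1" using assms(1) dd_alt by auto
  define d where "d = max_degree p"
  have finp: "finite {k. gamma_coeff p k \<noteq> 0}" by (rule finite_S)
  have i2d: "i + 2 \<le> d" unfolding d_def max_degree_def using assms(6) finp
    by (intro Max_ge) auto
  have dmax: "\<And>k. gamma_coeff p k \<noteq> 0 \<Longrightarrow> k \<le> d" unfolding d_def max_degree_def using finp
    by (intro Max_ge) auto
  have dmem: "gamma_coeff p d \<noteq> 0" unfolding d_def max_degree_def using finp assms(6)
    using Max_in by fastforce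
  show ?thesis
  proof (intro exI[of _ "min (coeff p (i - 1)) (coeff p (i + 1))"] conjI allI impI)
    show "0 < min (coeff p (i - 1)) (coeff p (i + 1))" using gi gi2 by simp
    fix \<beta> :: real
    assume \<beta>: "0 < \<beta> \<and> \<beta> < min (coeff p (i - 1)) (coeff p (i + 1))"
    define q where "q = p + monom \<beta> i - (monom (c1 * \<beta>) (i - 1) + monom (c2 * \<beta>) (i + 1))"
    have pq: "poly q x = poly p x + \<beta> * x ^ i - c1 * \<beta> * x ^ (i - 1) - c2 * \<beta> * x ^ (i + 1)" for x
      by (simp add: q_def poly_monom)
    have cq: "coeff q j = coeff p j + (if j = i then \<beta> else 0) - (if j = i - 1 then c1 * \<beta> else 0)
        - (if j = i + 1 then c2 * \<beta> else 0)" for j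
      by (simp add: q_def coeff_monom)
    have fact: "poly q x - poly p x = - (c2 * \<beta>) * x ^ (i - 1) * ((x - 1) * (x - real i / (real i + 2)))" for x
    proof -
      define r where "r = real i / (real i + 2)"
      define y where "y = x ^ (i - 1)"
      have e1: "x ^ i = y * x" "x ^ (i + 1) = y * x * x"
        using assms(3) unfolding y_def
        by (metis Suc_diff_1 Suc_eq_plus1 less_trans power_Suc2 zero_less_one)+
      have p1: "real i + 2 \<noteq> 0" "real i + 1 \<noteq> 0" by linarith+
      have h1: "c2 * (1 + r) = 1" "c2 * r = c1"
        unfolding c1_def c2_def r_def using p1 by (simp_all add: divide_simps)
      have "- (c2 * \<beta>) * y * ((x - 1) * (x - r)) = - \<beta> * y * (c2 * x * x - c2 * (1 + r) * x + c2 * r)"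
        by (simp add: algebra_simps)
      also have "\<dots> = - \<beta> * y * (c2 * x * x - x + c1)" using h1 by simp
      finally have "- (c2 * \<beta>) * y * ((x - 1) * (x - r)) = - \<beta> * y * (c2 * x * x - x + c1)" .
      then show ?thesis unfolding pq e1 y_def[symmetric] r_def[symmetric]
        by (simp add: algebra_simps)
    qed
    have "degree_distribution q"
      unfolding dd_alt
    proof (intro conjI allI)
      show "coeff q 0 = 0" using assms(3) dd(1) by (simp add: cq)
      have "poly q 1 = 1 + \<beta> - (c1 + c2) * \<beta>" by (simp add: pq dd(3) algebra_simps)
      then show "poly q 1 = 1" using c12 by simp
      fix j show "coeff q j \<ge> 0"
      proof -
        consider "j = i" | "j = i - 1" | "j = i + 1" | "j \<noteq> i \<and> j \<noteq> i - 1 \<and> j \<noteq> i + 1" by blast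
        then show ?thesis
        proof cases
          case 1
          have "i \<noteq> i - 1" using assms(3) by simp
          then show ?thesis using 1 dd(2)[of j] \<beta> by (simp add: cq)
        next
          case 2
          have "c1 * \<beta> < coeff p (i - 1)" using c1 \<beta>
            by (smt (verit) min_less_iff_conj mult_less_cancel_right1)
          then show ?thesis using 2 assms(3) by (simp add: cq)
        next
          case 3
          have "c2 * \<beta> < coeff p (i + 1)" using c2 \<beta>
            by (smt (verit) min_less_iff_conj mult_less_cancel_right1)
          then show ?thesis using 3 assms(3) by (simp add: cq)
        next
          case 4 then show ?thesis using dd(2)[of j] by (simp add: cq)
        qed
      qed
    qed
    moreover have "avg_degree q = avg_degree p"
    proof -
      have P: "((\<lambda>x::real. x ^ n) has_integral 1 / (real n + 1)) {0..1}" for n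
      proof -
        have "((\<lambda>x::real. x ^ n) has_integral ((\<lambda>x. x ^ Suc n / Suc n) 1 - (\<lambda>x. x ^ Suc n / Suc n) 0)) {0..1}"
        proof (intro fundamental_theorem_of_calculus ballI)
          fix x :: real
          have "((\<lambda>x. x ^ Suc n / Suc n) has_real_derivative x ^ n) (at x)"
            by (intro derivative_eq_intros) auto
          then show "((\<lambda>x. x ^ Suc n / Suc n) has_vector_derivative x ^ n) (at x within {0..1})"
            by (simp add: has_real_derivative_iff_has_vector_derivative[symmetric] has_field_derivative_at_within del: of_nat_Suc)
        qed simp
        then show ?thesis by (simp add: add.commute)
      qed
      have D: "((\<lambda>x. \<beta> * x ^ i - c1 * \<beta> * x ^ (i - 1) - c2 * \<beta> * x ^ (i + 1)) has_integral
          (\<beta> * (1 / (real i + 1)) - c1 * \<beta> * (1 / (real (i - 1) + 1)) - c2 * \<beta> * (1 / (real (i + 1) + 1)))) {0..1}"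
        by (intro has_integral_diff has_integral_mult_right P)
      have r1: "real (i - 1) + 1 = real i" using assms(3) by (simp add: of_nat_diff)
      have "\<beta> * (1 / (real i + 1)) - c1 * \<beta> * (1 / (real (i - 1) + 1)) - c2 * \<beta> * (1 / (real (i + 1) + 1)) = 0"
      proof -
      have r2: "real (i + 1) + 1 = real i + 2" by simp
        have p1: "real i + 2 \<noteq> 0" "real i + 1 \<noteq> 0" "real i \<noteq> 0" using assms(3) by simp_all
        have e1: "c1 * (1 / real i) = 1 / (2 * (real i + 1))" unfolding c1_def using p1 by (simp add: divide_simps)
        have e2: "c2 * (1 / (real i + 2)) = 1 / (2 * (real i + 1))" unfolding c2_def using p1 by (simp add: divide_simps)
        have "c1 * \<beta> * (1/real i) + c2*\<beta>*(1/(real i+2)) = \<beta> * (c1*(1/real i) + c2*(1/(real i+2)))" by (simp add: algebra_simps)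
        also have "\<dots> = \<beta> * (1 / (real i + 1))" unfolding e1 e2 using p1 by (simp add: field_simps)
        finally show ?thesis unfolding r1 r2 by linarith
      qed
      with D have D0: "((\<lambda>x. \<beta> * x ^ i - c1 * \<beta> * x ^ (i - 1) - c2 * \<beta> * x ^ (i + 1)) has_integral 0) {0..1}" by simp
      have Pi: "((\<lambda>x. poly p x) has_integral integral {0..1} (\<lambda>x. poly p x)) {0..1}"
        by (intro integrable_integral integrable_continuous_interval) (auto intro: continuous_intros)
      have "((\<lambda>x. poly p x + (\<beta> * x ^ i - c1 * \<beta> * x ^ (i - 1) - c2 * \<beta> * x ^ (i + 1))) has_integral
          (integral {0..1} (\<lambda>x. poly p x) + 0)) {0..1}"
        by (intro has_integral_add Pi D0)
      then have "integral {0..1} (\<lambda>x. poly q x) = integral {0..1} (\<lambda>x. poly p x)"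
        by (intro integral_unique) (simp add: pq algebra_simps)
      then show ?thesis by (simp add: avg_degree_def)
    qed
    moreover have "max_degree q = max_degree p"
    proof -
      have gq: "gamma_coeff q k = gamma_coeff p k + (if k = i + 1 then \<beta> else 0)
          - (if k = i then c1 * \<beta> else 0) - (if k = i + 2 then c2 * \<beta> else 0)" for k
      proof (cases k)
        case 0 then show ?thesis using assms(3) by (simp add: gamma_coeff_def)
      next
        case (Suc m) then show ?thesis using assms(3) by (auto simp: gamma_coeff_def cq)
      qed
      have "Max {k. gamma_coeff q k \<noteq> 0} = d"
      proof (rule Max_eqI[OF finite_S])
        fix y assume "y \<in> {k. gamma_coeff q k \<noteq> 0}"
        then have y: "gamma_coeff q y \<noteq> 0" by simp
        show "y \<le> d"
        proof (cases "y = i \<or> y = i + 1 \<or> y = i + 2")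
          case True then show ?thesis using i2d by auto
        next
          case False then show ?thesis using y dmax by (simp add: gq)
        qed
      next
        show "d \<in> {k. gamma_coeff q k \<noteq> 0}"
        proof (cases "d = i + 2")
          case True
          have "c2 * \<beta> < coeff p (i + 1)" using c2 \<beta>
            by (smt (verit) min_less_iff_conj mult_less_cancel_right1)
          moreover have "gamma_coeff q d = coeff p (i + 1) - c2 * \<beta>"
            unfolding gq using True by (simp add: gamma_coeff_def)
          ultimately show ?thesis by simp
        next
          case False then show ?thesis using i2d dmem by (simp add: gq)
        qed
      qed
      then show ?thesis by (simp add: max_degree_def d_def)
    qed
    moreover have "\<forall>x. real i / (real i + 2) < x \<and> x < 1 \<longrightarrow> poly p x < poly q x"
    proof (intro allI impI)
      fix x :: real assume x: "real i / (real i + 2) < x \<and> x < 1"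
      have "0 < x" using x by (smt (verit) divide_nonneg_nonneg of_nat_0_le_iff)
      hence "0 < - (c2 * \<beta>) * x ^ (i - 1) * ((x - 1) * (x - real i / (real i + 2)))"
        using x c2 \<beta> by (intro mult_neg_neg mult_neg_pos) auto
      thus "poly p x < poly q x" using fact[of x] by linarith
    qed
    moreover have "\<forall>x. 0 < x \<and> x < real i / (real i + 2) \<longrightarrow> poly p x > poly q x"
    proof (intro allI impI)
      fix x :: real assume x: "0 < x \<and> x < real i / (real i + 2)"
      have "real i / (real i + 2) < 1" by simp
      then have "x < 1" using x by linarith
      then have h1: "0 < (x - 1) * (x - real i / (real i + 2))" using x by (intro mult_neg_neg) auto
      have h2: "- (c2 * \<beta>) * x ^ (i - 1) < 0" using x c2 \<beta> by (intro mult_neg_pos) auto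
      have "- (c2 * \<beta>) * x ^ (i - 1) * ((x - 1) * (x - real i / (real i + 2))) < 0"
        by (rule mult_neg_pos[OF h2 h1])
      thus "poly p x > poly q x" using fact[of x] by linarith
    qed
    ultimately show "let q = p + monom \<beta> i
                    - (monom (real i / (2 * (real i + 1)) * \<beta>) (i - 1)
                       + monom ((real i + 2) / (2 * (real i + 1)) * \<beta>) (i + 1))
            in degree_distribution q \<and>
               avg_degree q = avg_degree p \<and>
               max_degree q = max_degree p \<and>
               (\<forall>x. real i / (real i + 2) < x \<and> x < 1 \<longrightarrow> poly p x < poly q x) \<and>
               (\<forall>x. 0 < x \<and> x < real i / (real i + 2) \<longrightarrow> poly p x > poly q x)"
      unfolding Let_def c1_def[symmetric] c2_def[symmetric] q_def[symmetric] by (intro conjI)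
  qed
qed

end
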